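(* Let $k,n,m$ be positive integers with $n+m\le k$ and $q$ a prime power. Let $\mathbb{T}$ be the set of $1$-dimensional subspaces of $\mathbb{F}_q^k$ and let $\mathbb{X}=\{\{T_1,\dots,T_n\}\subseteq\mathbb{T}:\dim(T_1+\cdots+T_n)=n\}$, $\mathbb{Y}=\{\{T_1,\dots,T_m\}\subseteq\mathbb{T}:\dim(T_1+\cdots+T_m)=m\}$, $\mathbb{Z}=\{\{T_1,\dots,T_{n+m}\}\subseteq\mathbb{T}:\dim(T_1+\cdots+T_{n+m})=n+m\}$. Let $B$ be the bipartite graph with left vertex set $\mathbb{X}$, right vertex set $\mathbb{Y}$, and $X$ adjacent to $Y$ iff $X\cup Y\in\mathbb{Z}$. For $Z\in\mathbb{Z}$, the set $\mathcal{C}_Z=\{\{X,Z\setminus X\}: X\subseteq Z,\ |X|=n\}$ is a subset of $E(B)$ and is an induced matching of $B$ of size $\binom{n+m}{m}$.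
   Context: An induced matching of a bipartite graph $B$ is a set $\mathcal{C}\subseteq E(B)$ such that for any two distinct $\{k_1,f_1\},\{k_2,f_2\}\in\mathcal{C}$: $k_1\ne k_2$, $f_1\ne f_2$, and $\{k_1,f_2\},\{k_2,f_1\}\notin E(B)$. *)

theory Defs
  imports "HOL-Analysis.Analysis"
begin

definition lines :: "('a::field ^ 'k) set set" where
  "lines = {T. vec.subspace T \<and> vec.dim T = 1}"

text \<open>Sets of r lines whose sum T_1 + ... + T_r has dimension r.
  The sum of subspaces is the span of their union.\<close>
definition indep_lines :: "nat \<Rightarrow> ('a::field ^ 'k) set set set" where
  "indep_lines r = {X. X \<subseteq> lines \<and> card X = r \<and> vec.dim (vec.span (\<Union>X)) = r}"

definition bip_edges :: "nat \<Rightarrow> nat \<Rightarrow> (('a::field ^ 'k) set set \<times> ('a ^ 'k) set set) set" where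
  "bip_edges n m = {(X, Y). X \<in> indep_lines n \<and> Y \<in> indep_lines m \<and> X \<union> Y \<in> indep_lines (n + m)}"

definition induced_matching :: "('l \<times> 'r) set \<Rightarrow> ('l \<times> 'r) set \<Rightarrow> bool" where
  "induced_matching E C \<longleftrightarrow> C \<subseteq> E \<and>
     (\<forall>(k1, f1) \<in> C. \<forall>(k2, f2) \<in> C. (k1, f1) \<noteq> (k2, f2) \<longrightarrow>
        k1 \<noteq> k2 \<and> f1 \<noteq> f2 \<and> (k1, f2) \<notin> E \<and> (k2, f1) \<notin> E)"

end

theory Submission
  imports Defs
begin

lemma dim_Un_le:
  fixes A B :: "('a::field ^ 'k) set"
  shows "vec.dim (A \<union> B) \<le> vec.dim A + vec.dim B"
proof -
  obtain BA where a: "BA \<subseteq> A" "vec.independent BA" "A \<subseteq> vec.span BA" "card BA = vec.dim A"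
    by (rule vec.basis_exists)
  obtain BB where b: "BB \<subseteq> B" "vec.independent BB" "B \<subseteq> vec.span BB" "card BB = vec.dim B"
    by (rule vec.basis_exists)
  have fa: "finite BA" using a(2) vec.independent_bound_general by blast
  have fb: "finite BB" using b(2) vec.independent_bound_general by blast
  have "A \<union> B \<subseteq> vec.span (BA \<union> BB)"
    using a(3) b(3) vec.span_mono[of BA "BA \<union> BB"] vec.span_mono[of BB "BA \<union> BB"] by blast
  then have "vec.dim (A \<union> B) \<le> card (BA \<union> BB)" using fa fb vec.dim_le_card by blast
  also have "\<dots> \<le> card BA + card BB" by (rule card_Un_le)
  finally show ?thesis using a(4) b(4) by simp
qed

lemma dim_Union_le:
  fixes X :: "('a::field ^ 'k) set set"
  assumes "finite X" "X \<subseteq> lines"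
  shows "vec.dim (\<Union>X) \<le> card X"
  using assms
proof (induction X rule: finite_induct)
  case empty
  then show ?case by simp
next
  case (insert T F)
  have "vec.dim (\<Union>(insert T F)) \<le> vec.dim T + vec.dim (\<Union>F)"
    using dim_Un_le[of T "\<Union>F"] by simp
  moreover have "vec.dim T = 1" using insert(4) by (auto simp: lines_def)
  ultimately show ?case using insert by simp
qed

lemma sub_indep:
  fixes Z :: "('a::field ^ 'k) set set"
  assumes "Z \<in> indep_lines r" "0 < r" "X \<subseteq> Z"
  shows "X \<in> indep_lines (card X)"
proof -
  have fZ: "finite Z" using assms(1,2) by (auto simp: indep_lines_def intro: card_ge_0_finite)
  have L: "Z \<subseteq> lines" and cZ: "card Z = r" and dZ: "vec.dim (\<Union>Z) = r"
    using assms(1) by (auto simp: indep_lines_def)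
  have fX: "finite X" using fZ assms(3) finite_subset by blast
  have fY: "finite (Z - X)" using fZ by simp
  have "\<Union>Z = \<Union>X \<union> \<Union>(Z - X)" using assms(3) by blast
  then have "r \<le> vec.dim (\<Union>X) + vec.dim (\<Union>(Z - X))" using dZ dim_Un_le by metis
  moreover have "vec.dim (\<Union>(Z - X)) \<le> card (Z - X)" using fY L by (intro dim_Union_le) auto
  moreover have "vec.dim (\<Union>X) \<le> card X" using fX L assms(3) by (intro dim_Union_le) auto
  moreover have "card (Z - X) = r - card X" using cZ card_Diff_subset[OF fX assms(3)] by simp
  moreover have "card X \<le> r" using cZ card_mono[OF fZ assms(3)] by simp
  ultimately have "vec.dim (\<Union>X) = card X" by linarith
  then show ?thesis using L assms(3) by (auto simp: indep_lines_def)
qed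

theorem lemma10:
  fixes n m :: nat and Z :: "('a::{field,finite} ^ 'k) set set"
  assumes "0 < n" and "0 < m" and "n + m \<le> CARD('k)"
    and "Z \<in> indep_lines (n + m)"
  shows "{(X, Z - X) | X. X \<subseteq> Z \<and> card X = n} \<subseteq> bip_edges n m
    \<and> induced_matching (bip_edges n m) {(X, Z - X) | X. X \<subseteq> Z \<and> card X = n}
    \<and> card {(X, Z - X) | X. X \<subseteq> Z \<and> card X = n} = (n + m) choose m"
proof -
  have pos: "0 < n + m" using assms by simp
  have fZ: "finite Z" using assms(4) pos by (auto simp: indep_lines_def intro: card_ge_0_finite)
  have cZ: "card Z = n + m" using assms(4) by (auto simp: indep_lines_def)
  let ?C = "{(X, Z - X) | X. X \<subseteq> Z \<and> card X = n}"
  have sub: "?C \<subseteq> bip_edges n m"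
  proof
    fix p assume "p \<in> ?C"
    then obtain X where p: "p = (X, Z - X)" "X \<subseteq> Z" "card X = n" by blast
    have "X \<in> indep_lines n" using sub_indep[OF assms(4) pos p(2)] p(3) by simp
    moreover have "card (Z - X) = m" using cZ p fZ by (simp add: card_Diff_subset finite_subset)
    then have "Z - X \<in> indep_lines m" using sub_indep[OF assms(4) pos, of "Z - X"] by simp
    moreover have "X \<union> (Z - X) = Z" using p by blast
    ultimately show "p \<in> bip_edges n m" using p assms(4) by (simp add: bip_edges_def)
  qed
  have cross: "(A, Z - B) \<notin> bip_edges n m"
    if "A \<subseteq> Z" "card A = n" "B \<subseteq> Z" "card B = n" "A \<noteq> B" for A B
  proof
    assume "(A, Z - B) \<in> bip_edges n m"
    then have "card (A \<union> (Z - B)) = n + m" by (simp add: bip_edges_def indep_lines_def)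
    moreover have "A \<union> (Z - B) \<subseteq> Z" using that by blast
    ultimately have "A \<union> (Z - B) = Z" using cZ fZ card_subset_eq by metis
    then have "B \<subseteq> A" using that by blast
    then have "B = A" using that fZ by (metis card_subset_eq finite_subset)
    then show False using that by simp
  qed
  have dif: "Z - A \<noteq> Z - B" if "A \<subseteq> Z" "B \<subseteq> Z" "A \<noteq> B" for A B
    using that by blast
  have im: "induced_matching (bip_edges n m) ?C"
    unfolding induced_matching_def using sub cross dif by auto
  have "?C = (\<lambda>X. (X, Z - X)) ` {X. X \<subseteq> Z \<and> card X = n}" by blast
  then have "card ?C = card {X. X \<subseteq> Z \<and> card X = n}"
    by (simp add: card_image inj_on_def)
  also have "\<dots> = (n + m) choose n" using n_subsets[OF fZ] cZ by simp
  also have "\<dots> = (n + m) choose m" using binomial_symmetric[of n "n+m"] by simp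
  finally show ?thesis using sub im by simp
qed

end
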